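(* Let $n_1,\dots,n_s\ge0$, $A=\mathrm{diag}(\mathbb{J}_{1,n_1}(0),\dots,\mathbb{J}_{s,n_s}(0))$, and let $B$ satisfy $AB+BA=0$. Write $B=(B_{ij})_{1\le i,j\le s}$ in the block form of $A$ ($B_{ij}$ of size $in_i\times jn_j$), so that $B_{ij}=\mathrm{LB}^-(i,j,(B^{(1)}_{ij},\dots,B^{(\min(i,j))}_{ij}))$ with $n_i\times n_j$ matrices $B^{(k)}_{ij}$. Then: (1) $B$ is similar to a block upper-triangular matrix whose diagonal blocks are, up to order, the matrices $B^{(1)}_{ii}$ (each appearing $\lceil i/2\rceil$ times) and $-B^{(1)}_{ii}$ (each appearing $\lfloor i/2\rfloor$ times), $1\le i\le s$; (2) $\chi^B(X)=\prod_{i=1}^s\chi^{B_{ii}}(X)$; (3) $\chi^B(X)=\prod_{i=1}^s\big(\chi^{B^{(1)}_{ii}}(X)\big)^{\lceil i/2\rceil}\big(\chi^{-B^{(1)}_{ii}}(X)\big)^{\lfloor i/2\rfloor}$.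
   Context: $\chi^M(X)$ is the characteristic polynomial of a square matrix $M$. $\mathbb{J}_{i,k}(0)$ is the $i\times i$ block matrix with $k\times k$ blocks whose $(l,l+1)$ blocks are $I_k$ ($1\le l\le i-1$) and all other blocks $0$. For matrices $C_1,\dots,C_k$ of the same size, $k=\min(s,t)$, the $s\times t$ block matrix $\mathrm{LB}^-(s,t,(C_1,\dots,C_k))$ is: if $s\ge t$, block $(i,j)$ is $(-1)^{i-1}C_{j-i+1}$ for $1\le i\le j\le t$ and $0$ otherwise; if $s\le t$, block $(i,t-s+j)$ is $(-1)^{i-1}C_{j-i+1}$ for $1\le i\le j\le s$ and all other blocks are $0$. (Every $B$ anti-commuting with $A$ has this block form.) *)

theory Defs
  imports "Jordan_Normal_Form.Jordan_Normal_Form" "HOL-Library.Multiset"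
begin

text \<open>The i x i block matrix with k x k blocks, identity blocks at block
positions (l,l+1), zero elsewhere; i.e. entry (r,c) is 1 iff c = r + k.\<close>
definition J_blk :: "nat \<Rightarrow> nat \<Rightarrow> 'a :: {zero,one} mat" where
  "J_blk i k = mat (i*k) (i*k) (\<lambda>(r,c). if c = r + k then 1 else 0)"

definition A_mat :: "nat \<Rightarrow> (nat \<Rightarrow> nat) \<Rightarrow> 'a :: {zero,one} mat" where
  "A_mat s n = diag_block_mat (map (\<lambda>i. J_blk i (n i)) [1..<s+1])"

definition tot_size :: "nat \<Rightarrow> (nat \<Rightarrow> nat) \<Rightarrow> nat" where
  "tot_size s n = (\<Sum>i\<in>{1..s}. i * n i)"

definition blk_off :: "(nat \<Rightarrow> nat) \<Rightarrow> nat \<Rightarrow> nat" where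
  "blk_off n i = (\<Sum>j\<in>{1..<i}. j * n j)"

definition blk :: "'a mat \<Rightarrow> nat \<Rightarrow> nat \<Rightarrow> nat \<Rightarrow> nat \<Rightarrow> 'a mat" where
  "blk M r c h w = mat h w (\<lambda>(i,j). M $$ (r+i, c+j))"

text \<open>Diagonal block B_ii (size i n_i) and B_ii^(1) (its top-left n_i x n_i block).\<close>
definition B_diag :: "'a mat \<Rightarrow> (nat \<Rightarrow> nat) \<Rightarrow> nat \<Rightarrow> 'a mat" where
  "B_diag B n i = blk B (blk_off n i) (blk_off n i) (i * n i) (i * n i)"

definition B_one :: "'a mat \<Rightarrow> (nat \<Rightarrow> nat) \<Rightarrow> nat \<Rightarrow> 'a mat" where
  "B_one B n i = blk B (blk_off n i) (blk_off n i) (n i) (n i)"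

definition block_upper_tri :: "'a :: zero mat \<Rightarrow> 'a mat list \<Rightarrow> bool" where
  "block_upper_tri T Ds \<longleftrightarrow>
     (\<forall>D\<in>set Ds. D \<in> carrier_mat (dim_row D) (dim_row D)) \<and>
     (let d = \<lambda>p. dim_row (Ds ! p); ofs = \<lambda>p. sum_list (map dim_row (take p Ds)) in
       T \<in> carrier_mat (sum_list (map dim_row Ds)) (sum_list (map dim_row Ds)) \<and>
       (\<forall>p<length Ds. blk T (ofs p) (ofs p) (d p) (d p) = Ds ! p) \<and>
       (\<forall>p<length Ds. \<forall>q<p. blk T (ofs p) (ofs q) (d p) (d q) = 0\<^sub>m (d p) (d q)))"

end

theory Submission
  imports Defs
begin


lemma char_poly_four_block_zero:
  fixes A1 :: "'a :: field mat"
  assumes A1: "A1 \<in> carrier_mat k k" and A2: "A2 \<in> carrier_mat k m" and A4: "A4 \<in> carrier_mat m m"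
  shows "char_poly (four_block_mat A1 A2 (0\<^sub>m m k) A4) = char_poly A1 * char_poly A4"
proof -
  have "char_poly_matrix (four_block_mat A1 A2 (0\<^sub>m m k) A4) =
     four_block_mat (char_poly_matrix A1) (map_mat (\<lambda>a. [:- a:]) A2) (0\<^sub>m m k) (char_poly_matrix A4)"
    using A1 A2 A4 by (intro eq_matI) (auto simp: char_poly_matrix_def)
  then show ?thesis unfolding char_poly_def
    by (simp add: det_four_block_mat_lower_left_zero[of _ k _ m] A1 A2 A4)
qed

lemma blk_blk: "r' + h' \<le> h \<Longrightarrow> c' + w' \<le> w \<Longrightarrow>
  blk (blk M r c h w) r' c' h' w' = blk M (r + r') (c + c') h' w'"
  unfolding blk_def by (intro eq_matI) (auto simp: add.assoc)

lemma locate_block: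
  "(r::nat) < sum_list (map f xs) \<Longrightarrow> \<exists>p<length xs. sum_list (map f (take p xs)) \<le> r \<and> r < sum_list (map f (take p xs)) + f (xs!p)"
proof (induction xs arbitrary: r)
  case Nil then show ?case by simp
next
  case (Cons x xs)
  show ?case
  proof (cases "r < f x")
    case True then show ?thesis by (intro exI[of _ 0]) auto
  next
    case False
    then have "r - f x < sum_list (map f xs)" using Cons.prems by simp
    from Cons.IH[OF this] obtain p where "p < length xs" "sum_list (map f (take p xs)) \<le> r - f x"
      "r - f x < sum_list (map f (take p xs)) + f (xs!p)" by blast
    then show ?thesis using False by (intro exI[of _ "Suc p"]) auto
  qed
qed

lemma char_poly_0: "A \<in> carrier_mat 0 0 \<Longrightarrow> char_poly (A :: 'a :: field mat) = 1"
  unfolding char_poly_def by (subst det_def) (auto simp: char_poly_matrix_def)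

lemma block_upper_tri_char_poly:
  "block_upper_tri (T :: 'a :: field mat) Ds \<Longrightarrow> char_poly T = prod_list (map char_poly Ds)"
proof (induction Ds arbitrary: T)
  case Nil
  then show ?case unfolding block_upper_tri_def by (simp add: char_poly_0)
next
  case (Cons D Ds)
  define d where "d = dim_row D"
  define m where "m = sum_list (map dim_row Ds)"
  have D: "D \<in> carrier_mat d d" using Cons.prems unfolding block_upper_tri_def d_def by auto
  have T: "T \<in> carrier_mat (d + m) (d + m)" using Cons.prems unfolding block_upper_tri_def d_def m_def Let_def by auto
  have diag: "\<And>p. p<length (D#Ds) \<Longrightarrow> blk T (sum_list (map dim_row (take p (D#Ds)))) (sum_list (map dim_row (take p (D#Ds))))
     (dim_row ((D#Ds)!p)) (dim_row ((D#Ds)!p)) = (D#Ds) ! p"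
    using Cons.prems unfolding block_upper_tri_def Let_def by blast
  have low: "\<And>p q. p<length (D#Ds) \<Longrightarrow> q < p \<Longrightarrow> blk T (sum_list (map dim_row (take p (D#Ds)))) (sum_list (map dim_row (take q (D#Ds))))
     (dim_row ((D#Ds)!p)) (dim_row ((D#Ds)!q)) = 0\<^sub>m (dim_row ((D#Ds)!p)) (dim_row ((D#Ds)!q))"
    using Cons.prems unfolding block_upper_tri_def Let_def by blast
  define T' where "T' = blk T d d m m"
  have T'b: "block_upper_tri T' Ds"
    unfolding block_upper_tri_def Let_def
  proof (intro conjI allI impI)
    show "\<forall>D\<in>set Ds. D \<in> carrier_mat (dim_row D) (dim_row D)"
      using Cons.prems unfolding block_upper_tri_def by auto
    show "T' \<in> carrier_mat (sum_list (map dim_row Ds)) (sum_list (map dim_row Ds))"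
      unfolding T'_def blk_def m_def by auto
  next
    fix p assume p: "p < length Ds"
    have le: "sum_list (map dim_row (take p Ds)) + dim_row (Ds!p) \<le> m"
    proof -
      have "take (Suc p) Ds = take p Ds @ [Ds!p]" using p by (simp add: take_Suc_conv_app_nth)
      then have "sum_list (map dim_row (take p Ds)) + dim_row (Ds!p) = sum_list (map dim_row (take (Suc p) Ds))" by simp
      also have "\<dots> \<le> m" unfolding m_def
        by (metis append_take_drop_id le_add1 map_append sum_list_append)
      finally show ?thesis .
    qed
    have "blk T (d + sum_list (map dim_row (take p Ds))) (d + sum_list (map dim_row (take p Ds))) (dim_row (Ds!p)) (dim_row (Ds!p)) = Ds ! p"
      using diag[of "Suc p"] p by (simp add: d_def)
    then show "blk T' (sum_list (map dim_row (take p Ds))) (sum_list (map dim_row (take p Ds))) (dim_row (Ds ! p)) (dim_row (Ds ! p)) = Ds ! p"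
      unfolding T'_def using le by (simp add: blk_blk)
  next
    fix p q assume p: "p < length Ds" and q: "q < p"
    have le: "sum_list (map dim_row (take p Ds)) + dim_row (Ds!p) \<le> m"
    proof -
      have "take (Suc p) Ds = take p Ds @ [Ds!p]" using p by (simp add: take_Suc_conv_app_nth)
      then have "sum_list (map dim_row (take p Ds)) + dim_row (Ds!p) = sum_list (map dim_row (take (Suc p) Ds))" by simp
      also have "\<dots> \<le> m" unfolding m_def
        by (metis append_take_drop_id le_add1 map_append sum_list_append)
      finally show ?thesis .
    qed
    have leq: "sum_list (map dim_row (take q Ds)) + dim_row (Ds!q) \<le> m"
    proof -
      have "take (Suc q) Ds = take q Ds @ [Ds!q]" using p q by (simp add: take_Suc_conv_app_nth)
      then have "sum_list (map dim_row (take q Ds)) + dim_row (Ds!q) = sum_list (map dim_row (take (Suc q) Ds))" by simp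
      also have "\<dots> \<le> m" unfolding m_def
        by (metis append_take_drop_id le_add1 map_append sum_list_append)
      finally show ?thesis .
    qed
    have "blk T (d + sum_list (map dim_row (take p Ds))) (d + sum_list (map dim_row (take q Ds))) (dim_row (Ds!p)) (dim_row (Ds!q)) = 0\<^sub>m (dim_row (Ds!p)) (dim_row (Ds!q))"
      using low[of "Suc p" "Suc q"] p q by (simp add: d_def)
    then show "blk T' (sum_list (map dim_row (take p Ds))) (sum_list (map dim_row (take q Ds))) (dim_row (Ds ! p)) (dim_row (Ds ! q)) = 0\<^sub>m (dim_row (Ds ! p)) (dim_row (Ds ! q))"
      unfolding T'_def using le leq by (simp add: blk_blk)
  qed
  have D': "blk T 0 0 d d = D" using diag[of 0] by (simp add: d_def)
  have LL: "T $$ (d + r, c) = 0" if r: "r < m" and c: "c < d" for r c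
  proof -
    from locate_block[OF r[unfolded m_def]] obtain p where p: "p < length Ds"
      "sum_list (map dim_row (take p Ds)) \<le> r" "r < sum_list (map dim_row (take p Ds)) + dim_row (Ds!p)" by blast
    have "blk T (d + sum_list (map dim_row (take p Ds))) 0 (dim_row (Ds!p)) d = 0\<^sub>m (dim_row (Ds!p)) d"
      using low[of "Suc p" 0] p by (simp add: d_def)
    from arg_cong[OF this, of "\<lambda>M. M $$ (r - sum_list (map dim_row (take p Ds)), c)"]
    show ?thesis using p c unfolding blk_def by simp
  qed
  have Teq: "T = four_block_mat D (blk T 0 d d m) (0\<^sub>m m d) T'"
    using T D LL
    by (intro eq_matI) (auto simp: T'_def blk_def D'[symmetric] dest: spec[of _ "_ - d"]
        , metis LL le_add_diff_inverse2 not_less add_diff_cancel_left' less_diff_conv2 add.commute)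
  have "char_poly T = char_poly D * char_poly T'"
    by (subst Teq, rule char_poly_four_block_zero) (auto simp: D T'_def blk_def)
  then show ?case using Cons.IH[OF T'b] by simp
qed

lemma blk_off_Suc: "blk_off n (Suc i) = blk_off n i + i * n i"
  by (cases i) (auto simp: blk_off_def)

lemma tot_blk: "tot_size s n = blk_off n (Suc s)"
  unfolding tot_size_def blk_off_def by (simp add: atLeastLessThanSuc_atLeastAtMost)

lemma blk_off_mono: "i \<le> j \<Longrightarrow> blk_off n i \<le> blk_off n j"
  unfolding blk_off_def by (rule sum_mono2) auto

lemma lin_lt: "(l::nat) < i \<Longrightarrow> a < m \<Longrightarrow> l * m + a < i * m"
proof -
  assume "l < i" "a < m"
  then have "Suc l * m \<le> i * m" by (intro mult_le_mono1) simp
  then show ?thesis using \<open>a < m\<close> by simp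
qed

lemma A_mat_carrier: "(A_mat s n :: 'a :: {zero,one} mat) \<in> carrier_mat (tot_size s n) (tot_size s n)"
proof (induction s)
  case 0 then show ?case by (simp add: A_mat_def tot_size_def)
next
  case (Suc s)
  have "[1..<Suc s + 1] = [1..<s+1] @ [Suc s]" by simp
  then have "(A_mat (Suc s) n :: 'a mat) = diag_block_mat (map (\<lambda>i. J_blk i (n i)) [1..<s+1] @ [J_blk (Suc s) (n (Suc s))])"
    unfolding A_mat_def by simp
  also have "\<dots> = four_block_mat (A_mat s n) (0\<^sub>m (tot_size s n) (Suc s * n (Suc s))) (0\<^sub>m (Suc s * n (Suc s)) (tot_size s n)) (J_blk (Suc s) (n (Suc s)))"
    unfolding diag_block_mat_last Let_def A_mat_def[symmetric] using carrier_matD[OF Suc.IH] by (simp add: J_blk_def)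
  finally show ?case using Suc.IH by (simp add: J_blk_def tot_blk blk_off_Suc)
qed

lemma A_mat_entry:
  assumes "x < tot_size s n" "y < tot_size s n"
  shows "(A_mat s n :: 'a :: {zero,one} mat) $$ (x,y) = (if \<exists>i\<in>{1..s}. blk_off n i \<le> x \<and> y = x + n i \<and> y < blk_off n (Suc i) then 1 else 0)"
  using assms
proof (induction s arbitrary: x y)
  case 0 then show ?case by (simp add: tot_size_def)
next
  case (Suc s)
  define t where "t = tot_size s n"
  define k where "k = n (Suc s)"
  have tS: "tot_size (Suc s) n = t + Suc s * k" unfolding t_def k_def tot_blk blk_off_Suc by simp
  have "[1..<Suc s + 1] = [1..<s+1] @ [Suc s]" by simp
  then have "(A_mat (Suc s) n :: 'a mat) = diag_block_mat (map (\<lambda>i. J_blk i (n i)) [1..<s+1] @ [J_blk (Suc s) (n (Suc s))])"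
    unfolding A_mat_def by simp
  also have "\<dots> = four_block_mat (A_mat s n) (0\<^sub>m t (Suc s * k)) (0\<^sub>m (Suc s * k) t) (J_blk (Suc s) k)"
    unfolding diag_block_mat_last Let_def A_mat_def[symmetric] using carrier_matD[OF A_mat_carrier[of s n, where 'a='a]]
    by (simp add: J_blk_def t_def k_def)
  finally have Aeq: "(A_mat (Suc s) n :: 'a mat) = four_block_mat (A_mat s n) (0\<^sub>m t (Suc s * k)) (0\<^sub>m (Suc s * k) t) (J_blk (Suc s) k)" .
  have bnd: "i \<le> s \<Longrightarrow> blk_off n (Suc i) \<le> t" for i unfolding t_def tot_blk by (rule blk_off_mono) simp
  have tt: "t = blk_off n (Suc s)" unfolding t_def tot_blk ..
  have Ac: "(A_mat s n :: 'a mat) \<in> carrier_mat t t" using A_mat_carrier unfolding t_def .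
  have x: "x < t + Suc s * k" and y: "y < t + Suc s * k" using Suc.prems tS by auto
  show ?case
  proof (cases "x < t")
    case xt: True
    show ?thesis
    proof (cases "y < t")
      case yt: True
      have "(\<exists>i\<in>{1..Suc s}. blk_off n i \<le> x \<and> y = x + n i \<and> y < blk_off n (Suc i)) =
            (\<exists>i\<in>{1..s}. blk_off n i \<le> x \<and> y = x + n i \<and> y < blk_off n (Suc i))"
      proof
        assume "\<exists>i\<in>{1..Suc s}. blk_off n i \<le> x \<and> y = x + n i \<and> y < blk_off n (Suc i)"
        then obtain i where i: "i \<in> {1..Suc s}" "blk_off n i \<le> x" "y = x + n i" "y < blk_off n (Suc i)" by blast
        have "i \<noteq> Suc s" using i xt tt by auto
        then have "i \<in> {1..s}" using i by auto
        then show "\<exists>i\<in>{1..s}. blk_off n i \<le> x \<and> y = x + n i \<and> y < blk_off n (Suc i)" using i by blast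
      qed auto
      then show ?thesis unfolding Aeq using carrier_matD[OF Ac] xt yt x y Suc.IH[of x y] by (simp add: t_def J_blk_def)
    next
      case yt: False
      have "\<not> (\<exists>i\<in>{1..Suc s}. blk_off n i \<le> x \<and> y = x + n i \<and> y < blk_off n (Suc i))"
        using xt yt tt bnd by (auto simp: le_Suc_eq) (metis le_trans not_less)+
      then show ?thesis unfolding Aeq using carrier_matD[OF Ac] xt yt x y by (auto simp: J_blk_def)
    qed
  next
    case xt: False
    show ?thesis
    proof (cases "y < t")
      case yt: True
      have "\<not> (\<exists>i\<in>{1..Suc s}. blk_off n i \<le> x \<and> y = x + n i \<and> y < blk_off n (Suc i))"
        using xt yt by auto
      then show ?thesis unfolding Aeq using carrier_matD[OF Ac] xt yt x y by (auto simp: J_blk_def)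
    next
      case yt: False
      have "(\<exists>i\<in>{1..Suc s}. blk_off n i \<le> x \<and> y = x + n i \<and> y < blk_off n (Suc i)) =
            (y = x + k)"
      proof
        assume "\<exists>i\<in>{1..Suc s}. blk_off n i \<le> x \<and> y = x + n i \<and> y < blk_off n (Suc i)"
        then obtain i where i: "i \<in> {1..Suc s}" "blk_off n i \<le> x" "y = x + n i" "y < blk_off n (Suc i)" by blast
        have "i = Suc s"
        proof (rule ccontr)
          assume "i \<noteq> Suc s" then have "i \<le> s" using i by auto
          from bnd[OF this] i xt show False by auto
        qed
        then show "y = x + k" using i k_def by simp
      next
        assume "y = x + k"
        then show "\<exists>i\<in>{1..Suc s}. blk_off n i \<le> x \<and> y = x + n i \<and> y < blk_off n (Suc i)"
          using xt y tt by (intro bexI[of _ "Suc s"]) (auto simp: k_def blk_off_Suc)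
      qed
      then show ?thesis unfolding Aeq using carrier_matD[OF Ac] xt yt x y by (auto simp: J_blk_def)
    qed
  qed
qed

definition idx :: "(nat \<Rightarrow> nat) \<Rightarrow> nat \<Rightarrow> nat \<Rightarrow> nat \<Rightarrow> nat" where
  "idx n i l a = blk_off n i + l * n i + a"

definition vld :: "nat \<Rightarrow> (nat \<Rightarrow> nat) \<Rightarrow> nat \<Rightarrow> nat \<Rightarrow> nat \<Rightarrow> bool" where
  "vld s n i l a \<longleftrightarrow> 1 \<le> i \<and> i \<le> s \<and> l < i \<and> a < n i"

lemma idx_bnd: "vld s n i l a \<Longrightarrow> blk_off n i \<le> idx n i l a \<and> idx n i l a < blk_off n (Suc i)"
  unfolding vld_def idx_def blk_off_Suc using lin_lt[of l i a "n i"] by auto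

lemma idx_tot: "vld s n i l a \<Longrightarrow> idx n i l a < tot_size s n"
proof -
  assume v: "vld s n i l a"
  have "blk_off n (Suc i) \<le> blk_off n (Suc s)" using v unfolding vld_def by (intro blk_off_mono) auto
  then show ?thesis using idx_bnd[OF v] unfolding tot_blk by linarith
qed

lemma blk_unique:
  assumes "blk_off n i \<le> x" "x < blk_off n (Suc i)" "blk_off n j \<le> x" "x < blk_off n (Suc j)"
  shows "i = j"
proof (rule ccontr)
  assume "i \<noteq> j"
  then consider "Suc i \<le> j" | "Suc j \<le> i" by linarith
  then show False
  proof cases
    case 1 then have "blk_off n (Suc i) \<le> blk_off n j" by (rule blk_off_mono)
    then show False using assms by linarith
  next
    case 2 then have "blk_off n (Suc j) \<le> blk_off n i" by (rule blk_off_mono)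
    then show False using assms by linarith
  qed
qed

lemma divmod_lin: "(a::nat) < m \<Longrightarrow> (l * m + a) div m = l \<and> (l * m + a) mod m = a"
  by auto


lemma idx_inj:
  assumes v1: "vld s n i l a" and v2: "vld s n j q b" and e: "idx n i l a = idx n j q b"
  shows "i = j \<and> l = q \<and> a = b"
proof -
  have ij: "i = j"
    by (rule blk_unique[of n i "idx n i l a" j]) (use idx_bnd[OF v1] idx_bnd[OF v2] e in auto)
  then have eq: "l * n i + a = q * n i + b" using e unfolding idx_def by simp
  have a: "a < n i" and b: "b < n i" using v1 v2 ij unfolding vld_def by auto
  have "l = (l * n i + a) div n i" using divmod_lin[OF a, of l] by simp
  also have "\<dots> = q" using eq divmod_lin[OF b, of q] by simp
  finally have lq: "l = q" .
  have "a = (l * n i + a) mod n i" using divmod_lin[OF a, of l] by simp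
  also have "\<dots> = b" using eq divmod_lin[OF b, of q] by simp
  finally show ?thesis using ij lq by simp
qed

lemma idx_surj: "x < tot_size s n \<Longrightarrow> \<exists>i l a. vld s n i l a \<and> x = idx n i l a"
proof (induction s)
  case 0 then show ?case by (simp add: tot_size_def)
next
  case (Suc s)
  show ?case
  proof (cases "x < tot_size s n")
    case True
    then obtain i l a where "vld s n i l a" "x = idx n i l a" using Suc.IH by blast
    then show ?thesis by (intro exI[of _ i] exI[of _ l] exI[of _ a]) (auto simp: vld_def)
  next
    case False
    define r where "r = x - blk_off n (Suc s)"
    define m where "m = n (Suc s)"
    have xr: "x = blk_off n (Suc s) + r" using False unfolding r_def tot_blk by simp
    have r: "r < Suc s * m" using Suc.prems xr unfolding m_def tot_blk blk_off_Suc[of n "Suc s"] by simp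
    then have m0: "m > 0" by (cases m) auto
    have l: "r div m < Suc s" using r by (simp add: div_less_iff_less_mult m0)
    have a: "r mod m < m" using m0 by simp
    have "r div m * m + r mod m = r" by (rule div_mult_mod_eq)
    then have "x = idx n (Suc s) (r div m) (r mod m)"
      unfolding idx_def xr m_def[symmetric] by simp
    moreover have "vld (Suc s) n (Suc s) (r div m) (r mod m)" unfolding vld_def m_def[symmetric] using l a by simp
    ultimately show ?thesis by blast
  qed
qed

lemma A_row:
  assumes v: "vld s n i l a" and y: "y < tot_size s n"
  shows "(A_mat s n :: 'a :: {zero,one} mat) $$ (idx n i l a, y) = (if Suc l < i \<and> y = idx n i (Suc l) a then 1 else 0)"
proof -
  let ?x = "idx n i l a"
  have ex: "(\<exists>i'\<in>{1..s}. blk_off n i' \<le> ?x \<and> y = ?x + n i' \<and> y < blk_off n (Suc i')) = (Suc l < i \<and> y = idx n i (Suc l) a)"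
  proof
    assume "\<exists>i'\<in>{1..s}. blk_off n i' \<le> ?x \<and> y = ?x + n i' \<and> y < blk_off n (Suc i')"
    then obtain i' where i': "blk_off n i' \<le> ?x" "y = ?x + n i'" "y < blk_off n (Suc i')" by blast
    have "i' = i" using i' idx_bnd[OF v] by (intro blk_unique[of n i' ?x i]) auto
    then have yy: "y = idx n i (Suc l) a" using i' unfolding idx_def by simp
    then have "l * n i + a + n i < i * n i" using i' \<open>i' = i\<close> unfolding idx_def blk_off_Suc by simp
    then have "Suc l * n i < i * n i" by simp
    then have "Suc l < i" using mult_less_cancel2 by blast
    then show "Suc l < i \<and> y = idx n i (Suc l) a" using yy by simp
  next
    assume h: "Suc l < i \<and> y = idx n i (Suc l) a"
    have "Suc l * n i + a < i * n i" using h v lin_lt unfolding vld_def by blast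
    then show "\<exists>i'\<in>{1..s}. blk_off n i' \<le> ?x \<and> y = ?x + n i' \<and> y < blk_off n (Suc i')"
      using h v unfolding vld_def idx_def blk_off_Suc by (intro bexI[of _ i]) auto
  qed
  show ?thesis by (subst A_mat_entry[OF idx_tot[OF v] y]) (simp only: ex)
qed

lemma A_col:
  assumes v: "vld s n j q b" and x: "x < tot_size s n"
  shows "(A_mat s n :: 'a :: {zero,one} mat) $$ (x, idx n j q b) = (if 0 < q \<and> x = idx n j (q - 1) b then 1 else 0)"
proof -
  let ?y = "idx n j q b"
  have ex: "(\<exists>i'\<in>{1..s}. blk_off n i' \<le> x \<and> ?y = x + n i' \<and> ?y < blk_off n (Suc i')) = (0 < q \<and> x = idx n j (q - 1) b)"
  proof
    assume "\<exists>i'\<in>{1..s}. blk_off n i' \<le> x \<and> ?y = x + n i' \<and> ?y < blk_off n (Suc i')"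
    then obtain i' where i': "blk_off n i' \<le> x" "?y = x + n i'" "?y < blk_off n (Suc i')" by blast
    have "i' = j" using i' idx_bnd[OF v] by (intro blk_unique[of n i' ?y j]) auto
    then have "blk_off n j + n j \<le> blk_off n j + q * n j + b" using i' unfolding idx_def by simp
    then have "n j \<le> q * n j + b" by simp
    then have q: "0 < q" using v unfolding vld_def by (cases q) auto
    have "x = idx n j (q - 1) b" using i' \<open>i' = j\<close> q unfolding idx_def
      by (cases q) auto
    then show "0 < q \<and> x = idx n j (q - 1) b" using q by simp
  next
    assume h: "0 < q \<and> x = idx n j (q - 1) b"
    then show "\<exists>i'\<in>{1..s}. blk_off n i' \<le> x \<and> ?y = x + n i' \<and> ?y < blk_off n (Suc i')"
      using v idx_bnd[OF v] unfolding vld_def idx_def by (intro bexI[of _ j]) (cases q, auto)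
  qed
  show ?thesis by (subst A_mat_entry[OF x idx_tot[OF v]]) (simp only: ex)
qed

lemma AB_entry:
  fixes B :: "'a :: field mat"
  assumes B: "B \<in> carrier_mat (tot_size s n) (tot_size s n)" and v: "vld s n i l a" and y: "y < tot_size s n"
  shows "(A_mat s n * B) $$ (idx n i l a, y) = (if Suc l < i then B $$ (idx n i (Suc l) a, y) else 0)"
proof -
  have "(A_mat s n * B) $$ (idx n i l a, y) = (\<Sum>k\<in>{0..<tot_size s n}. A_mat s n $$ (idx n i l a, k) * B $$ (k, y))"
    using B y idx_tot[OF v] A_mat_carrier[of s n, where 'a='a] by (simp add: scalar_prod_def)
  also have "\<dots> = (\<Sum>k\<in>{0..<tot_size s n}. if k = idx n i (Suc l) a then (if Suc l < i then B $$ (k, y) else 0) else 0)"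
    by (rule sum.cong) (auto simp: A_row[OF v])
  also have "\<dots> = (if Suc l < i then B $$ (idx n i (Suc l) a, y) else 0)"
  proof (cases "Suc l < i")
    case True
    then have "vld s n i (Suc l) a" using v unfolding vld_def by auto
    then show ?thesis using idx_tot by (simp add: True)
  qed simp
  finally show ?thesis .
qed

lemma BA_entry:
  fixes B :: "'a :: field mat"
  assumes B: "B \<in> carrier_mat (tot_size s n) (tot_size s n)" and v: "vld s n j q b" and x: "x < tot_size s n"
  shows "(B * A_mat s n) $$ (x, idx n j q b) = (if 0 < q then B $$ (x, idx n j (q - 1) b) else 0)"
proof -
  have "(B * A_mat s n) $$ (x, idx n j q b) = (\<Sum>k\<in>{0..<tot_size s n}. B $$ (x, k) * A_mat s n $$ (k, idx n j q b))"
    using B x idx_tot[OF v] A_mat_carrier[of s n, where 'a='a] by (simp add: scalar_prod_def)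
  also have "\<dots> = (\<Sum>k\<in>{0..<tot_size s n}. if k = idx n j (q - 1) b then (if 0 < q then B $$ (x, k) else 0) else 0)"
    by (rule sum.cong) (auto simp: A_col[OF v])
  also have "\<dots> = (if 0 < q then B $$ (x, idx n j (q - 1) b) else 0)"
  proof (cases "0 < q")
    case True
    then have "vld s n j (q - 1) b" using v unfolding vld_def by auto
    then show ?thesis using idx_tot by (simp add: True)
  qed simp
  finally show ?thesis .
qed

definition anti_rel :: "nat \<Rightarrow> (nat \<Rightarrow> nat) \<Rightarrow> 'a :: field mat \<Rightarrow> bool" where
  "anti_rel s n B \<longleftrightarrow> (\<forall>i l a j q b. vld s n i l a \<longrightarrow> vld s n j q b \<longrightarrow>
     (if Suc l < i then B $$ (idx n i (Suc l) a, idx n j q b) else 0)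
     + (if 0 < q then B $$ (idx n i l a, idx n j (q - 1) b) else 0) = 0)"

lemma anti_rel_from:
  fixes B :: "'a :: field mat"
  assumes B: "B \<in> carrier_mat (tot_size s n) (tot_size s n)"
    and AB: "A_mat s n * B + B * A_mat s n = 0\<^sub>m (tot_size s n) (tot_size s n)"
  shows "anti_rel s n B"
  unfolding anti_rel_def
proof (intro allI impI)
  fix i l a j q b assume v1: "vld s n i l a" and v2: "vld s n j q b"
  have "(A_mat s n * B + B * A_mat s n) $$ (idx n i l a, idx n j q b) = 0"
    using AB idx_tot[OF v1] idx_tot[OF v2] by simp
  then show "(if Suc l < i then B $$ (idx n i (Suc l) a, idx n j q b) else 0)
     + (if 0 < q then B $$ (idx n i l a, idx n j (q - 1) b) else 0) = 0"
    using B idx_tot[OF v1] idx_tot[OF v2] A_mat_carrier[of s n, where 'a='a]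
    by (simp add: AB_entry[OF B v1 idx_tot[OF v2]] BA_entry[OF B v2 idx_tot[OF v1]])
qed


lemma rel_inst: "anti_rel s n B \<Longrightarrow> vld s n i l a \<Longrightarrow> vld s n j q b \<Longrightarrow>
     (if Suc l < i then B $$ (idx n i (Suc l) a, idx n j q b) else 0)
     + (if 0 < q then B $$ (idx n i l a, idx n j (q - 1) b) else 0) = 0"
  unfolding anti_rel_def by blast

lemma R1:
  assumes r: "anti_rel s n B" and v1: "vld s n i (Suc p) a" and v2: "vld s n j (Suc q) b"
  shows "B $$ (idx n i (Suc p) a, idx n j (Suc q) b) = - B $$ (idx n i p a, idx n j q b)"
proof -
  have v1': "vld s n i p a" using v1 unfolding vld_def by auto
  have "Suc p < i" using v1 unfolding vld_def by auto
  then have "B $$ (idx n i (Suc p) a, idx n j (Suc q) b) + B $$ (idx n i p a, idx n j q b) = 0"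
    using rel_inst[OF r v1' v2] by simp
  then show ?thesis by (simp add: eq_neg_iff_add_eq_0)
qed

lemma R2:
  assumes r: "anti_rel s n B" and v1: "vld s n i (Suc p) a" and v2: "vld s n j 0 b"
  shows "B $$ (idx n i (Suc p) a, idx n j 0 b) = 0"
proof -
  have v1': "vld s n i p a" using v1 unfolding vld_def by auto
  have "Suc p < i" using v1 unfolding vld_def by auto
  then show ?thesis using rel_inst[OF r v1' v2] by simp
qed

lemma R3:
  assumes r: "anti_rel s n B" and v1: "vld s n i l a" and li: "Suc l = i" and v2: "vld s n j (Suc q) b"
  shows "B $$ (idx n i l a, idx n j q b) = 0"
  using rel_inst[OF r v1 v2] li by simp

lemma zero1:
  assumes r: "anti_rel s n B"
  shows "vld s n i p a \<Longrightarrow> vld s n j q b \<Longrightarrow> q < p \<Longrightarrow> B $$ (idx n i p a, idx n j q b) = 0"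
proof (induction q arbitrary: p)
  case 0
  then obtain p' where p: "p = Suc p'" by (cases p) auto
  show ?case using R2[OF r] 0 unfolding p by blast
next
  case (Suc q)
  then obtain p' where p: "p = Suc p'" by (cases p) auto
  have "vld s n i p' a" "vld s n j q b" "q < p'" using Suc.prems p unfolding vld_def by auto
  then show ?case using R1[OF r] Suc.prems Suc.IH unfolding p by simp
qed

lemma zero2:
  assumes r: "anti_rel s n B"
  shows "vld s n i p a \<Longrightarrow> vld s n j q b \<Longrightarrow> q + i < p + j \<Longrightarrow> B $$ (idx n i p a, idx n j q b) = 0"
proof (induction "i - Suc p" arbitrary: p q)
  case 0
  then have li: "Suc p = i" unfolding vld_def by auto
  have "vld s n j (Suc q) b" using 0 li unfolding vld_def by auto
  then show ?case using R3[OF r 0(2) li] by simp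
next
  case (Suc d)
  have v1: "vld s n i (Suc p) a" using Suc.prems Suc.hyps unfolding vld_def by auto
  have v2: "vld s n j (Suc q) b" using Suc.prems Suc.hyps unfolding vld_def by auto
  have "B $$ (idx n i (Suc p) a, idx n j (Suc q) b) = 0"
    using Suc.hyps Suc.prems v1 v2 by (intro Suc.hyps(1)) auto
  then show ?case using R1[OF r v1 v2] by simp
qed

lemma diag_rel:
  assumes r: "anti_rel s n B"
  shows "vld s n i p a \<Longrightarrow> vld s n i p b \<Longrightarrow>
    B $$ (idx n i p a, idx n i p b) = (if even p then B $$ (idx n i 0 a, idx n i 0 b) else - B $$ (idx n i 0 a, idx n i 0 b))"
proof (induction p)
  case 0 then show ?case by simp
next
  case (Suc p)
  have "vld s n i p a" "vld s n i p b" using Suc.prems unfolding vld_def by auto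
  then show ?case using R1[OF r Suc.prems] Suc.IH by simp
qed

lemma nz_cond:
  assumes r: "anti_rel s n B" and v1: "vld s n i p a" and v2: "vld s n j q b"
    and nz: "B $$ (idx n i p a, idx n j q b) \<noteq> 0"
  shows "p \<le> q \<and> p + j \<le> q + i"
  using zero1[OF r v1 v2] zero2[OF r v1 v2] nz by linarith


definition pairs :: "nat \<Rightarrow> (nat \<times> nat) list" where
  "pairs s = concat (map (\<lambda>i. map (\<lambda>l. (i, l)) [0..<i]) [1..<Suc s])"

lemma pairs_Suc: "pairs (Suc s) = pairs s @ map (\<lambda>l. (Suc s, l)) [0..<Suc s]"
  unfolding pairs_def by simp

lemma set_pairs: "set (pairs s) = {pr. 1 \<le> fst pr \<and> fst pr \<le> s \<and> snd pr < fst pr}"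
  unfolding pairs_def by auto

lemma distinct_pairs: "distinct (pairs s)"
proof (induction s)
  case 0 then show ?case by (simp add: pairs_def)
next
  case (Suc s)
  then show ?case unfolding pairs_Suc by (auto simp: set_pairs distinct_map inj_on_def)
qed

lemma sum_pairs: "sum_list (map (\<lambda>pr. n (fst pr)) (pairs s)) = tot_size s n"
proof (induction s)
  case 0 then show ?case by (simp add: pairs_def tot_size_def)
next
  case (Suc s)
  have "sum_list (map (\<lambda>pr. n (fst pr)) (map (\<lambda>l. (Suc s, l)) [0..<Suc s])) = Suc s * n (Suc s)"
    by (simp add: o_def sum_list_triv)
  then show ?case using Suc unfolding pairs_Suc tot_blk blk_off_Suc[of n "Suc s"] by simp
qed

lemma prod_alt: "prod_list (map (\<lambda>l. if even l then x else y) [0..<k]) = x ^ ((k + 1) div 2) * (y :: 'b :: comm_monoid_mult) ^ (k div 2)"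
proof (induction k)
  case 0 then show ?case by simp
next
  case (Suc k)
  show ?case
  proof (cases "even k")
    case True
    then have "(Suc k + 1) div 2 = Suc ((k + 1) div 2)" "Suc k div 2 = k div 2" by presburger+
    then show ?thesis using Suc True by (simp add: ac_simps)
  next
    case False
    then have "(Suc k + 1) div 2 = (k + 1) div 2" "Suc k div 2 = Suc (k div 2)" by presburger+
    then show ?thesis using Suc False by (simp add: ac_simps)
  qed
qed

lemma mset_alt: "mset (map (\<lambda>l. if even l then x else y) [0..<k]) = replicate_mset ((k + 1) div 2) x + replicate_mset (k div 2) y"
proof (induction k)
  case 0 then show ?case by simp
next
  case (Suc k)
  show ?case
  proof (cases "even k")
    case True
    then have "(Suc k + 1) div 2 = Suc ((k + 1) div 2)" "Suc k div 2 = k div 2" by presburger+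
    then show ?thesis using Suc True by (simp add: ac_simps)
  next
    case False
    then have "(Suc k + 1) div 2 = (k + 1) div 2" "Suc k div 2 = Suc (k div 2)" by presburger+
    then show ?thesis using Suc False by (simp add: ac_simps)
  qed
qed

lemma prod_pairs: "prod_list (map (\<lambda>pr. if even (snd pr) then X (fst pr) else Y (fst pr)) (pairs s))
   = (\<Prod>i\<in>{1..s}. X i ^ ((i + 1) div 2) * (Y i :: 'b :: comm_monoid_mult) ^ (i div 2))"
proof (induction s)
  case 0 then show ?case by (simp add: pairs_def)
next
  case (Suc s)
  have "prod_list (map (\<lambda>pr. if even (snd pr) then X (fst pr) else Y (fst pr)) (map (\<lambda>l. (Suc s, l)) [0..<Suc s]))
     = X (Suc s) ^ ((Suc s + 1) div 2) * Y (Suc s) ^ (Suc s div 2)"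
    unfolding map_map o_def fst_conv snd_conv by (rule prod_alt)
  then show ?case using Suc unfolding pairs_Suc by (simp add: prod.cl_ivl_Suc)
qed

lemma mset_pairs: "mset (map (\<lambda>pr. if even (snd pr) then X (fst pr) else Y (fst pr)) (pairs s))
   = (\<Sum>i\<in>{1..s}. replicate_mset ((i + 1) div 2) (X i) + replicate_mset (i div 2) (Y i))"
proof (induction s)
  case 0 then show ?case by (simp add: pairs_def)
next
  case (Suc s)
  have "mset (map (\<lambda>pr. if even (snd pr) then X (fst pr) else Y (fst pr)) (map (\<lambda>l. (Suc s, l)) [0..<Suc s]))
     = replicate_mset ((Suc s + 1) div 2) (X (Suc s)) + replicate_mset (Suc s div 2) (Y (Suc s))"
    unfolding map_map o_def fst_conv snd_conv by (rule mset_alt)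
  then show ?case using Suc unfolding pairs_Suc by (simp add: sum.cl_ivl_Suc)
qed

lemma perm_sum_list: "mset xs = mset ys \<Longrightarrow> sum_list (map (g :: 'a \<Rightarrow> 'b :: comm_monoid_add) xs) = sum_list (map g ys)"
proof -
  assume h: "mset xs = mset ys"
  have "sum_list (map g xs) = sum_mset (mset (map g xs))" by (rule sum_mset_sum_list[symmetric])
  also have "\<dots> = sum_mset (mset (map g ys))" by (simp only: mset_map h)
  also have "\<dots> = sum_list (map g ys)" by (rule sum_mset_sum_list)
  finally show ?thesis .
qed

lemma perm_prod_list: "mset xs = mset ys \<Longrightarrow> prod_list (map (g :: 'a \<Rightarrow> 'b :: comm_monoid_mult) xs) = prod_list (map g ys)"
proof -
  assume h: "mset xs = mset ys"
  have "prod_list (map g xs) = prod_mset (mset (map g xs))" by (rule prod_mset_prod_list[symmetric])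
  also have "\<dots> = prod_mset (mset (map g ys))" by (simp only: mset_map h)
  also have "\<dots> = prod_list (map g ys)" by (rule prod_mset_prod_list)
  finally show ?thesis .
qed

lemma nth_concat_off:
  "p < length xss \<Longrightarrow> r < length (xss ! p) \<Longrightarrow> concat xss ! (sum_list (map length (take p xss)) + r) = xss ! p ! r"
proof (induction xss arbitrary: p)
  case Nil then show ?case by simp
next
  case (Cons xs xss)
  show ?case
  proof (cases p)
    case 0 then show ?thesis using Cons.prems by (simp add: nth_append)
  next
    case (Suc p')
    then show ?thesis using Cons by (simp add: nth_append add.assoc)
  qed
qed

lemma take_sum_le: "p < length xs \<Longrightarrow> sum_list (map f (take p xs)) + f (xs ! p) \<le> sum_list (map f xs :: nat list)"
proof -
  assume p: "p < length xs"
  have "take (Suc p) xs = take p xs @ [xs!p]" using p by (simp add: take_Suc_conv_app_nth)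
  then have "sum_list (map f (take p xs)) + f (xs!p) = sum_list (map f (take (Suc p) xs))" by simp
  also have "\<dots> \<le> sum_list (map f xs)"
    by (metis append_take_drop_id le_add1 map_append sum_list_append)
  finally show ?thesis .
qed




lemma core:
  fixes B :: "'a :: field mat"
  assumes B: "B \<in> carrier_mat (tot_size s n) (tot_size s n)" and r: "anti_rel s n B"
  shows "(\<exists>T Ds. similar_mat B T \<and> block_upper_tri T Ds \<and>
            mset Ds = (\<Sum>i\<in>{1..s}. replicate_mset ((i + 1) div 2) (B_one B n i)
                                   + replicate_mset (i div 2) (- B_one B n i)))
         \<and> char_poly B = (\<Prod>i\<in>{1..s}. char_poly (B_one B n i) ^ ((i + 1) div 2)
                                     * char_poly (- B_one B n i) ^ (i div 2))"
proof -
  define N where "N = tot_size s n"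
  define L where "L = sort_key (\<lambda>pr. 2 * snd pr + (s - fst pr)) (pairs s)"
  define sz where "sz = (\<lambda>pr::nat\<times>nat. n (fst pr))"
  define blks where "blks = map (\<lambda>pr. map (idx n (fst pr) (snd pr)) [0..<n (fst pr)]) L"
  define idxs where "idxs = concat blks"
  define f where "f = (\<lambda>pr::nat\<times>nat. if even (snd pr) then B_one B n (fst pr) else - B_one B n (fst pr))"
  define Ds where "Ds = map f L"
  define T where "T = mat N N (\<lambda>(x,y). B $$ (idxs!x, idxs!y))"
  define P where "P = (mat N N (\<lambda>(x,y). if y = idxs!x then 1 else 0) :: 'a mat)"
  define Q where "Q = (mat N N (\<lambda>(x,y). if x = idxs!y then 1 else 0) :: 'a mat)"
  define ofs where "ofs = (\<lambda>p. sum_list (map sz (take p L)))"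
  have mL: "mset L = mset (pairs s)" by (simp add: L_def)
  have setL: "set L = set (pairs s)" by (simp add: L_def)
  have distL: "distinct L" using distinct_pairs by (simp add: L_def)
  have sortL: "sorted (map (\<lambda>pr. 2 * snd pr + (s - fst pr)) L)" by (simp add: L_def)
  have vL: "vld s n (fst pr) (snd pr) a" if "pr \<in> set L" "a < n (fst pr)" for pr a
    using that unfolding setL set_pairs vld_def by auto
  have len_blks: "map length blks = map sz L" unfolding blks_def sz_def by simp
  have sumN: "sum_list (map sz L) = N"
    unfolding N_def sz_def using perm_sum_list[OF mL] sum_pairs by metis
  have len_idxs: "length idxs = N" unfolding idxs_def length_concat len_blks sumN ..
  have set_idxs: "set idxs = {0..<N}"
  proof
    show "set idxs \<subseteq> {0..<N}"
    proof
      fix x assume "x \<in> set idxs"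
      then obtain pr a where pr: "pr \<in> set L" "a < n (fst pr)" "x = idx n (fst pr) (snd pr) a"
        unfolding idxs_def blks_def by auto
      show "x \<in> {0..<N}" using idx_tot[OF vL[OF pr(1,2)]] pr(3) N_def by simp
    qed
  next
    show "{0..<N} \<subseteq> set idxs"
    proof
      fix x assume xN: "x \<in> {0..<N}"
      obtain i l a where v: "vld s n i l a" and x: "x = idx n i l a" using idx_surj[of x s n] N_def xN by auto
      have "(i, l) \<in> set L" using v unfolding setL set_pairs vld_def by auto
      then show "x \<in> set idxs" unfolding idxs_def blks_def using v x unfolding vld_def by force
    qed
  qed
  have dist_idxs: "distinct idxs" by (rule card_distinct) (simp add: set_idxs len_idxs)
  have idxs_lt: "k < N \<Longrightarrow> idxs ! k < N" for k using set_idxs len_idxs nth_mem by fastforce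
  have idxs_at: "idxs ! (ofs p + a) = idx n (fst (L!p)) (snd (L!p)) a" if "p < length L" "a < sz (L!p)" for p a
  proof -
    have "map length (take p blks) = map sz (take p L)" by (metis len_blks take_map)
    then have "ofs p = sum_list (map length (take p blks))" unfolding ofs_def by simp
    moreover have "blks ! p ! a = idx n (fst (L!p)) (snd (L!p)) a" using that unfolding blks_def sz_def by simp
    moreover have "p < length blks" "a < length (blks ! p)" using that unfolding blks_def sz_def by auto
    ultimately show ?thesis unfolding idxs_def using nth_concat_off by metis
  qed
  have ofs_lt: "ofs p + a < N" if "p < length L" "a < sz (L!p)" for p a
    using take_sum_le[OF that(1), of sz] that(2) sumN unfolding ofs_def by linarith
  have dimf: "dim_row (f pr) = sz pr" "dim_col (f pr) = sz pr" for pr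
    unfolding f_def sz_def B_one_def blk_def by auto
  have ofsDs: "sum_list (map dim_row (take p Ds)) = ofs p" for p
  proof -
    have "map dim_row (take p Ds) = map sz (take p L)" unfolding Ds_def take_map map_map o_def dimf ..
    then show ?thesis unfolding ofs_def by simp
  qed
  have sumDs: "sum_list (map dim_row Ds) = N"
    unfolding Ds_def map_map o_def dimf using sumN by simp
  have TN: "T \<in> carrier_mat N N" unfolding T_def by simp
  have PN: "P \<in> carrier_mat N N" unfolding P_def by simp
  have QN: "Q \<in> carrier_mat N N" unfolding Q_def by simp
  have BN: "B \<in> carrier_mat N N" using B N_def by simp
  have PB: "(P * B) $$ (x, m) = B $$ (idxs!x, m)" if "x < N" "m < N" for x m
  proof -
    have "(P * B) $$ (x, m) = (\<Sum>k\<in>{0..<N}. (if k = idxs!x then 1 else 0) * B $$ (k, m))"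
      using that BN by (simp add: P_def scalar_prod_def)
    also have "\<dots> = (\<Sum>k\<in>{0..<N}. if k = idxs!x then B $$ (k, m) else 0)" by (rule sum.cong) auto
    also have "\<dots> = B $$ (idxs!x, m)" using idxs_lt[OF that(1)] by simp
    finally show ?thesis .
  qed
  have PBQ: "T = P * B * Q"
  proof (rule eq_matI)
    fix x y assume x: "x < dim_row (P * B * Q)" and y: "y < dim_col (P * B * Q)"
    then have x: "x < N" and y: "y < N" using PN QN by auto
    have "(P * B * Q) $$ (x, y) = (\<Sum>m\<in>{0..<N}. (P * B) $$ (x, m) * (if m = idxs!y then 1 else 0))"
      using x y PN BN by (simp add: Q_def scalar_prod_def)
    also have "\<dots> = (\<Sum>m\<in>{0..<N}. if m = idxs!y then B $$ (idxs!x, m) else 0)"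
      by (rule sum.cong) (auto simp: PB[OF x])
    also have "\<dots> = B $$ (idxs!x, idxs!y)" using idxs_lt[OF y] by simp
    finally show "T $$ (x, y) = (P * B * Q) $$ (x, y)" using x y by (simp add: T_def)
  qed (use PN QN in \<open>auto simp: T_def\<close>)
  have PQ: "P * Q = 1\<^sub>m N"
  proof (rule eq_matI)
    fix x y assume x: "x < dim_row (1\<^sub>m N :: 'a mat)" and y: "y < dim_col (1\<^sub>m N :: 'a mat)"
    then have x: "x < N" and y: "y < N" by auto
    have "(P * Q) $$ (x, y) = (\<Sum>k\<in>{0..<N}. (if k = idxs!x then 1 else 0) * (if k = idxs!y then 1 else 0))"
      using x y by (simp add: P_def Q_def scalar_prod_def)
    also have "\<dots> = (\<Sum>k\<in>{0..<N}. if k = idxs!x then (if idxs!x = idxs!y then 1 else 0) else 0)"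
      by (rule sum.cong) auto
    also have "\<dots> = (if idxs!x = idxs!y then 1 else 0)" using idxs_lt[OF x] by simp
    also have "\<dots> = (if x = y then 1 else 0)" using nth_eq_iff_index_eq[OF dist_idxs] x y len_idxs by simp
    finally show "(P * Q) $$ (x, y) = 1\<^sub>m N $$ (x, y)" using x y by simp
  qed (use PN QN in auto)
  have QP: "Q * P = 1\<^sub>m N" by (rule mat_mult_left_right_inverse[OF PN QN PQ])
  have simBT: "similar_mat B T"
    by (rule similar_mat_sym, rule similar_matI[of T B P Q N]) (use TN BN PN QN PQ QP PBQ in auto)
  have entry: "T $$ (ofs p + a, ofs q + c) = B $$ (idx n (fst (L!p)) (snd (L!p)) a, idx n (fst (L!q)) (snd (L!q)) c)"
    if "p < length L" "a < sz (L!p)" "q < length L" "c < sz (L!q)" for p a q c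
    using that ofs_lt idxs_at unfolding T_def by simp
  have but: "block_upper_tri T Ds"
    unfolding block_upper_tri_def Let_def ofsDs sumDs
  proof (intro conjI allI impI)
    show "\<forall>D\<in>set Ds. D \<in> carrier_mat (dim_row D) (dim_row D)"
      unfolding Ds_def using dimf by auto
    show "T \<in> carrier_mat N N" by (rule TN)
  next
    fix p assume p: "p < length Ds"
    then have p: "p < length L" unfolding Ds_def by simp
    have dp: "dim_row (Ds ! p) = sz (L!p)" using p dimf unfolding Ds_def by simp
    obtain i l where Lp: "L ! p = (i, l)" by fastforce
    have inL: "(i, l) \<in> set L" using p Lp nth_mem by metis
    show "blk T (ofs p) (ofs p) (dim_row (Ds ! p)) (dim_row (Ds ! p)) = Ds ! p"
    proof (rule eq_matI)
      fix a c assume a: "a < dim_row (Ds ! p)" and c: "c < dim_col (Ds ! p)"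
      have a': "a < n i" and c': "c < n i" using a c dimf p Lp unfolding Ds_def sz_def by auto
      have va: "vld s n i l a" and vc: "vld s n i l c" using vL[OF inL] a' c' by auto
      have "blk T (ofs p) (ofs p) (dim_row (Ds ! p)) (dim_row (Ds ! p)) $$ (a, c) = T $$ (ofs p + a, ofs p + c)"
        using a c dimf p unfolding blk_def Ds_def by simp
      also have "\<dots> = B $$ (idx n i l a, idx n i l c)" using entry[OF p _ p] a' c' Lp unfolding sz_def by simp
      also have "\<dots> = (if even l then B $$ (idx n i 0 a, idx n i 0 c) else - B $$ (idx n i 0 a, idx n i 0 c))"
        by (rule diag_rel[OF r va vc])
      also have "\<dots> = Ds ! p $$ (a, c)"
        using p Lp a' c' unfolding Ds_def f_def B_one_def blk_def idx_def by simp
      finally show "blk T (ofs p) (ofs p) (dim_row (Ds ! p)) (dim_row (Ds ! p)) $$ (a, c) = Ds ! p $$ (a, c)" .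
    qed (use dimf p in \<open>auto simp: blk_def Ds_def\<close>)
  next
    fix p q assume p: "p < length Ds" and qp: "q < p"
    then have p: "p < length L" and q: "q < length L" unfolding Ds_def by auto
    obtain i l where Lp: "L ! p = (i, l)" by fastforce
    obtain j m where Lq: "L ! q = (j, m)" by fastforce
    have inLp: "(i, l) \<in> set L" using p Lp nth_mem by metis
    have inLq: "(j, m) \<in> set L" using q Lq nth_mem by metis
    have neq: "L ! p \<noteq> L ! q" using nth_eq_iff_index_eq[OF distL p q] qp by simp
    have srt: "2 * m + (s - j) \<le> 2 * l + (s - i)"
      using sorted_nth_mono[OF sortL, of q p] qp p Lp Lq by simp
    have ij: "i \<le> s" "j \<le> s" using inLp inLq unfolding setL set_pairs by auto
    show "blk T (ofs p) (ofs q) (dim_row (Ds ! p)) (dim_row (Ds ! q)) = 0\<^sub>m (dim_row (Ds ! p)) (dim_row (Ds ! q))"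
    proof (rule eq_matI)
      fix a c assume a: "a < dim_row (0\<^sub>m (dim_row (Ds ! p)) (dim_row (Ds ! q)) :: 'a mat)"
        and c: "c < dim_col (0\<^sub>m (dim_row (Ds ! p)) (dim_row (Ds ! q)) :: 'a mat)"
      have a': "a < n i" and c': "c < n j" using a c dimf p q Lp Lq unfolding Ds_def sz_def by auto
      have va: "vld s n i l a" and vc: "vld s n j m c" using vL[OF inLp] vL[OF inLq] a' c' by auto
      have z: "B $$ (idx n i l a, idx n j m c) = 0"
      proof (rule ccontr)
        assume "B $$ (idx n i l a, idx n j m c) \<noteq> 0"
        from nz_cond[OF r va vc this] have "l \<le> m \<and> l + j \<le> m + i" .
        then have "l = m" "i = j" using srt ij by linarith+
        then show False using neq Lp Lq by simp
      qed
      have "blk T (ofs p) (ofs q) (dim_row (Ds ! p)) (dim_row (Ds ! q)) $$ (a, c) = T $$ (ofs p + a, ofs q + c)"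
        using a c unfolding blk_def by simp
      also have "\<dots> = 0" using entry[OF p _ q] a' c' Lp Lq z unfolding sz_def by simp
      finally show "blk T (ofs p) (ofs q) (dim_row (Ds ! p)) (dim_row (Ds ! q)) $$ (a, c) = 0\<^sub>m (dim_row (Ds ! p)) (dim_row (Ds ! q)) $$ (a, c)"
        using a c by simp
    qed (auto simp: blk_def)
  qed
  have msetDs: "mset Ds = (\<Sum>i\<in>{1..s}. replicate_mset ((i + 1) div 2) (B_one B n i)
                                   + replicate_mset (i div 2) (- B_one B n i))"
  proof -
    have "mset Ds = image_mset f (mset L)" unfolding Ds_def by simp
    also have "\<dots> = mset (map f (pairs s))" using mL by simp
    finally show ?thesis unfolding f_def using mset_pairs[of "\<lambda>i. B_one B n i" "\<lambda>i. - B_one B n i" s] by simp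
  qed
  have "char_poly B = char_poly T" by (rule char_poly_similar[OF simBT])
  also have "\<dots> = prod_list (map char_poly Ds)" by (rule block_upper_tri_char_poly[OF but])
  also have "\<dots> = prod_list (map (\<lambda>pr. char_poly (f pr)) L)" unfolding Ds_def by (simp add: o_def)
  also have "\<dots> = prod_list (map (\<lambda>pr. char_poly (f pr)) (pairs s))" by (rule perm_prod_list[OF mL])
  also have "\<dots> = prod_list (map (\<lambda>pr. if even (snd pr) then char_poly (B_one B n (fst pr)) else char_poly (- B_one B n (fst pr))) (pairs s))"
    unfolding f_def by (simp add: if_distrib)
  also have "\<dots> = (\<Prod>i\<in>{1..s}. char_poly (B_one B n i) ^ ((i + 1) div 2) * char_poly (- B_one B n i) ^ (i div 2))"
    using prod_pairs[of "\<lambda>i. char_poly (B_one B n i)" "\<lambda>i. char_poly (- B_one B n i)" s] by simp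
  finally show ?thesis using simBT but msetDs by blast
qed


lemma diag_case:
  fixes B :: "'a :: field mat"
  assumes B: "B \<in> carrier_mat (tot_size s n) (tot_size s n)" and r: "anti_rel s n B"
    and i: "1 \<le> i" "i \<le> s"
  shows "char_poly (B_diag B n i) = char_poly (B_one B n i) ^ ((i + 1) div 2) * char_poly (- B_one B n i) ^ (i div 2)"
proof -
  define n' where "n' = (\<lambda>j. if j = i then n i else 0)"
  define B' where "B' = B_diag B n i"
  have tot': "tot_size i n' = i * n i"
  proof -
    have "tot_size i n' = (\<Sum>j\<in>{1..i}. if j = i then i * n i else 0)"
      unfolding tot_size_def n'_def by (rule sum.cong) auto
    also have "\<dots> = i * n i" using i by simp
    finally show ?thesis .
  qed
  have off': "blk_off n' i = 0" unfolding blk_off_def n'_def by (rule sum.neutral) auto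
  have B'c: "B' \<in> carrier_mat (tot_size i n') (tot_size i n')" unfolding tot' B'_def B_diag_def blk_def by simp
  have map': "B' $$ (idx n' i l a, idx n' i q b) = B $$ (idx n i l a, idx n i q b)"
    if "l < i" "q < i" "a < n i" "b < n i" for l q a b
  proof -
    have "l * n i + a < i * n i" "q * n i + b < i * n i" using lin_lt that by auto
    then show ?thesis unfolding B'_def B_diag_def blk_def idx_def off' by (simp add: n'_def add.assoc)
  qed
  have vld': "vld i n' j l a \<Longrightarrow> j = i \<and> vld s n i l a" for j l a
    unfolding vld_def n'_def using i by (auto split: if_splits)
  have r': "anti_rel i n' B'"
    unfolding anti_rel_def
  proof (intro allI impI)
    fix i1 l a j q b assume v1: "vld i n' i1 l a" and v2: "vld i n' j q b"
    from vld'[OF v1] vld'[OF v2] have e: "i1 = i" "j = i" and w1: "vld s n i l a" and w2: "vld s n i q b" by auto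
    have l: "l < i" "a < n i" and q: "q < i" "b < n i" using w1 w2 unfolding vld_def by auto
    have "(if Suc l < i then B' $$ (idx n' i (Suc l) a, idx n' i q b) else 0)
        + (if 0 < q then B' $$ (idx n' i l a, idx n' i (q - 1) b) else 0)
        = (if Suc l < i then B $$ (idx n i (Suc l) a, idx n i q b) else 0)
        + (if 0 < q then B $$ (idx n i l a, idx n i (q - 1) b) else 0)"
      using map' l q by auto
    also have "\<dots> = 0" by (rule rel_inst[OF r w1 w2])
    finally have X: "(if Suc l < i then B' $$ (idx n' i (Suc l) a, idx n' i q b) else 0)
        + (if 0 < q then B' $$ (idx n' i l a, idx n' i (q - 1) b) else 0) = 0" .
    show "(if Suc l < i1 then B' $$ (idx n' i1 (Suc l) a, idx n' j q b) else 0)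
        + (if 0 < q then B' $$ (idx n' i1 l a, idx n' j (q - 1) b) else 0) = 0" unfolding e by (rule X)
  qed
  have "char_poly B' = (\<Prod>j\<in>{1..i}. char_poly (B_one B' n' j) ^ ((j + 1) div 2) * char_poly (- B_one B' n' j) ^ (j div 2))"
    using core[OF B'c r'] by blast
  also have "\<dots> = (\<Prod>j\<in>{1..i}. if j = i then char_poly (B_one B n i) ^ ((i + 1) div 2) * char_poly (- B_one B n i) ^ (i div 2) else 1)"
  proof (rule prod.cong)
    fix j assume j: "j \<in> {1..i}"
    show "char_poly (B_one B' n' j) ^ ((j + 1) div 2) * char_poly (- B_one B' n' j) ^ (j div 2) =
      (if j = i then char_poly (B_one B n i) ^ ((i + 1) div 2) * char_poly (- B_one B n i) ^ (i div 2) else 1)"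
    proof (cases "j = i")
      case True
      have "n i \<le> i * n i" using i by simp
      then have "B_one B' n' i = B_one B n i"
        unfolding B'_def B_one_def B_diag_def off' using blk_blk[of 0 "n i" "i * n i" 0 "n i" "i * n i" B "blk_off n i" "blk_off n i"]
        by (simp add: n'_def)
      then show ?thesis using True by simp
    next
      case False
      then have "B_one B' n' j \<in> carrier_mat 0 0" "- B_one B' n' j \<in> carrier_mat 0 0"
        unfolding B_one_def blk_def n'_def by auto
      then show ?thesis using False by (simp add: char_poly_0)
    qed
  qed simp
  also have "\<dots> = char_poly (B_one B n i) ^ ((i + 1) div 2) * char_poly (- B_one B n i) ^ (i div 2)"
    using i by simp
  finally show ?thesis unfolding B'_def .
qed

theorem lemma4p8:
  fixes s :: nat and n :: "nat \<Rightarrow> nat" and B :: "'a :: field mat"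
  assumes "B \<in> carrier_mat (tot_size s n) (tot_size s n)"
    and "A_mat s n * B + B * A_mat s n = 0\<^sub>m (tot_size s n) (tot_size s n)"
  shows "(\<exists>T Ds. similar_mat B T \<and> block_upper_tri T Ds \<and>
            mset Ds = (\<Sum>i\<in>{1..s}. replicate_mset ((i + 1) div 2) (B_one B n i)
                                   + replicate_mset (i div 2) (- B_one B n i)))
         \<and> char_poly B = (\<Prod>i\<in>{1..s}. char_poly (B_diag B n i))
         \<and> char_poly B = (\<Prod>i\<in>{1..s}. char_poly (B_one B n i) ^ ((i + 1) div 2)
                                     * char_poly (- B_one B n i) ^ (i div 2))"
proof -
  have r: "anti_rel s n B" by (rule anti_rel_from[OF assms])
  note c = core[OF assms(1) r]
  have "(\<Prod>i\<in>{1..s}. char_poly (B_diag B n i)) = (\<Prod>i\<in>{1..s}. char_poly (B_one B n i) ^ ((i + 1) div 2)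
                                     * char_poly (- B_one B n i) ^ (i div 2))"
    by (rule prod.cong[OF refl], rule diag_case[OF assms(1) r]) auto
  then show ?thesis using c by simp
qed


end
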